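(* For each $n\ge2$ let $\overline U_i^n$ denote agent $i$'s first-best payoff in the $n$-agent market. Then $\overline U_i^n(s)\le\overline U_i^{n+1}(s)$ for all $s\in[0,1]$ and all $n$, and $\overline U_i^n$ converges uniformly on $[0,1]$ to $\overline U_i^\infty(s)=s$ as $n\to\infty$.
   Context: Setup (for each $n$). A state $\omega\in\{-1,+1\}$ is drawn with probability $1/2$ each; there are $n$ agents whose signals are, conditional on $\omega$, i.i.d. with distribution $\mathbb F_\omega$ on $[0,1]$ (not depending on $n$), normalized so that $s_k=\mathbb P[\omega=+1\mid s_k]$; $\mathbb F_{-1},\mathbb F_{+1}$ are mutually absolutely continuous with densities, and $\mathbb F=(\mathbb F_{-1}+\mathbb F_{+1})/2$ has a density supported on a non-singleton interval in $[0,1]$. The first-best payoff is $\overline U_i^n(s)=s\,\mathbb P[e(s,s_{-i})\mid\omega=+1]-(1-s)\,\mathbb P[e(s,s_{-i})\mid\omega=-1]$ for $s\in[0,1]$, where $s_{-i}$ are the other $n-1$ signals and $e(s,s_{-i})$ is the event $s\prod_{k\ne i}s_k\ge(1-s)\prod_{k\ne i}(1-s_k)$. *)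

theory Defs
  imports "HOL-Probability.Probability"
begin

definition sig_dist :: "(real \<Rightarrow> real) \<Rightarrow> real measure" where
  "sig_dist f = density lborel (\<lambda>x. ennreal (f x))"

text \<open>Probability, given the state whose signal density is f, that with the other
  m signals (i.i.d. with density f) the event e(s, s_{-i}) occurs:
  s * prod s_k >= (1 - s) * prod (1 - s_k).\<close>
definition event_prob :: "(real \<Rightarrow> real) \<Rightarrow> nat \<Rightarrow> real \<Rightarrow> real" where
  "event_prob f m s =
     measure (PiM {..<m} (\<lambda>_. sig_dist f))
       {x \<in> space (PiM {..<m} (\<lambda>_. sig_dist f)).
          (1 - s) * (\<Prod>k<m. 1 - x k) \<le> s * (\<Prod>k<m. x k)}"

text \<open>First-best payoff of agent i in the n-agent market (n-1 other agents);
  fp, fm are the densities of F_{+1}, F_{-1}.\<close>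
definition first_best :: "(real \<Rightarrow> real) \<Rightarrow> (real \<Rightarrow> real) \<Rightarrow> nat \<Rightarrow> real \<Rightarrow> real" where
  "first_best fp fm n s = s * event_prob fp (n - 1) s - (1 - s) * event_prob fm (n - 1) s"

definition signal_density :: "(real \<Rightarrow> real) \<Rightarrow> bool" where
  "signal_density f \<longleftrightarrow> f \<in> borel_measurable borel \<and> (\<forall>x. 0 \<le> f x)
     \<and> (\<forall>x. x \<notin> {0..1} \<longrightarrow> f x = 0) \<and> prob_space (sig_dist f)"

definition signal_structure :: "(real \<Rightarrow> real) \<Rightarrow> (real \<Rightarrow> real) \<Rightarrow> bool" where
  "signal_structure fp fm \<longleftrightarrow>
     signal_density fp \<and> signal_density fm
     \<comment> \<open>mutual absolute continuity\<close>
     \<and> (AE s in lborel. (0 < fp s \<longleftrightarrow> 0 < fm s))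
     \<comment> \<open>normalization s = P[omega = +1 | s], i.e. fp s / (fp s + fm s) = s\<close>
     \<and> (AE s in lborel. fp s * (1 - s) = s * fm s)
     \<comment> \<open>F = (F_{-1}+F_{+1})/2 has density supported on a non-singleton interval\<close>
     \<and> (\<exists>a b. 0 \<le> a \<and> a < b \<and> b \<le> 1 \<and>
          (AE s in lborel. (s \<in> {a..b} \<longleftrightarrow> 0 < (fp s + fm s) / 2)))"

end

theory Submission
  imports Defs
begin


lemma PD:
  fixes H :: "real measure" and w :: "real \<Rightarrow> ennreal"
  assumes H: "prob_space H" and D: "prob_space (density H w)" and w[measurable]: "w \<in> borel_measurable H"
    and I: "finite I"
  shows "F \<in> borel_measurable (PiM I (\<lambda>_. H)) \<Longrightarrow>
    (\<integral>\<^sup>+ x. F x \<partial>PiM I (\<lambda>_. density H w)) = (\<integral>\<^sup>+ x. F x * (\<Prod>i\<in>I. w (x i)) \<partial>PiM I (\<lambda>_. H))"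
  using I
proof (induction I arbitrary: F rule: finite_induct)
  case empty
  then show ?case by (simp add: PiM_empty)
next
  case (insert i I)
  interpret PH: product_prob_space "\<lambda>_. H" UNIV
    by (simp add: H product_prob_space.intro product_prob_space_axioms.intro product_sigma_finite.intro prob_space_imp_sigma_finite)
  interpret PD: product_prob_space "\<lambda>_. density H w" UNIV
    by (simp add: D product_prob_space.intro product_prob_space_axioms.intro product_sigma_finite.intro prob_space_imp_sigma_finite)
  have sI: "sets (PiM (insert i I) (\<lambda>_. density H w)) = sets (PiM (insert i I) (\<lambda>_. H))"
    by (intro sets_PiM_cong) auto
  have sI': "sets (PiM I (\<lambda>_. density H w)) = sets (PiM I (\<lambda>_. H))"
    by (intro sets_PiM_cong) auto
  note Fm[measurable] = insert.prems
  have Fm': "F \<in> borel_measurable (PiM (insert i I) (\<lambda>_. density H w))"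
    using Fm measurable_cong_sets[OF sI refl] by blast
  have "(\<integral>\<^sup>+ x. F x \<partial>PiM (insert i I) (\<lambda>_. density H w))
     = (\<integral>\<^sup>+ x. (\<integral>\<^sup>+ y. F (x(i := y)) \<partial>density H w) \<partial>PiM I (\<lambda>_. density H w))"
    by (rule PD.product_nn_integral_insert[OF insert(1,2) Fm'])
  also have "\<dots> = (\<integral>\<^sup>+ x. (\<integral>\<^sup>+ y. w y * F (x(i := y)) \<partial>H) \<partial>PiM I (\<lambda>_. density H w))"
  proof (intro nn_integral_cong)
    fix x assume "x \<in> space (PiM I (\<lambda>_. density H w))"
    then have x: "x \<in> space (PiM I (\<lambda>_. H))" using sets_eq_imp_space_eq[OF sI'] by simp
    have "(\<lambda>y. F (x(i := y))) \<in> borel_measurable H"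
      using measurable_comp[OF measurable_component_update[OF x insert(2)] Fm] by (simp add: o_def)
    then show "(\<integral>\<^sup>+ y. F (x(i := y)) \<partial>density H w) = (\<integral>\<^sup>+ y. w y * F (x(i := y)) \<partial>H)"
      by (subst nn_integral_density) auto
  qed
  also have "\<dots> = (\<integral>\<^sup>+ x. (\<integral>\<^sup>+ y. w y * F (x(i := y)) \<partial>H) * (\<Prod>j\<in>I. w (x j)) \<partial>PiM I (\<lambda>_. H))"
    by (rule insert.IH) measurable
  also have "\<dots> = (\<integral>\<^sup>+ x. (\<integral>\<^sup>+ y. F (x(i := y)) * (\<Prod>j\<in>insert i I. w ((x(i := y)) j)) \<partial>H) \<partial>PiM I (\<lambda>_. H))"
  proof (intro nn_integral_cong)
    fix x assume x: "x \<in> space (PiM I (\<lambda>_. H))"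
    have "(\<lambda>y. F (x(i := y))) \<in> borel_measurable H"
      using measurable_comp[OF measurable_component_update[OF x insert(2)] Fm] by (simp add: o_def)
    note [measurable] = this
    have wy: "(\<Prod>j\<in>insert i I. w ((x(i := y)) j)) = w y * (\<Prod>j\<in>I. w (x j))" for y
      proof -
      have "(\<Prod>j\<in>I. w ((x(i := y)) j)) = (\<Prod>j\<in>I. w (x j))"
        using insert(2) by (intro prod.cong) auto
      then show ?thesis using insert(1,2) by simp
    qed
    then show "(\<integral>\<^sup>+ y. w y * F (x(i := y)) \<partial>H) * (\<Prod>j\<in>I. w (x j)) = (\<integral>\<^sup>+ y. F (x(i := y)) * (\<Prod>j\<in>insert i I. w ((x(i := y)) j)) \<partial>H)"
    proof -
      have "(\<integral>\<^sup>+ y. w y * F (x(i := y)) \<partial>H) * (\<Prod>j\<in>I. w (x j)) = (\<integral>\<^sup>+ y. w y * F (x(i := y)) * (\<Prod>j\<in>I. w (x j)) \<partial>H)"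
        by (rule nn_integral_multc[symmetric], rule borel_measurable_times_ennreal) (auto simp: w \<open>(\<lambda>y. F (x(i := y))) \<in> borel_measurable H\<close>)
      also have "\<dots> = (\<integral>\<^sup>+ y. F (x(i := y)) * (\<Prod>j\<in>insert i I. w ((x(i := y)) j)) \<partial>H)"
        using wy by (intro nn_integral_cong) (simp only: mult_ac)
      finally show ?thesis .
    qed
  qed
  also have "\<dots> = (\<integral>\<^sup>+ x. F x * (\<Prod>j\<in>insert i I. w (x j)) \<partial>PiM (insert i I) (\<lambda>_. H))"
    by (rule PH.product_nn_integral_insert[symmetric, OF insert(1,2)]) measurable
  finally show ?case .
qed




locale sigstr =
  fixes fp fm :: "real \<Rightarrow> real"
  assumes SS: "signal_structure fp fm"
begin

definition "hh x = (fp x + fm x) / 2"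
definition "HH = sig_dist hh"

lemma fp_facts: "fp \<in> borel_measurable borel" "\<And>x. 0 \<le> fp x" "\<And>x. x \<notin> {0..1} \<Longrightarrow> fp x = 0"
  "prob_space (sig_dist fp)"
  using SS unfolding signal_structure_def signal_density_def by auto

lemma fm_facts: "fm \<in> borel_measurable borel" "\<And>x. 0 \<le> fm x" "\<And>x. x \<notin> {0..1} \<Longrightarrow> fm x = 0"
  "prob_space (sig_dist fm)"
  using SS unfolding signal_structure_def signal_density_def by auto

declare fp_facts(1)[measurable] fm_facts(1)[measurable]

lemma norm_AE: "AE s in lborel. fp s * (1 - s) = s * fm s"
  using SS unfolding signal_structure_def by auto

lemma supp: "\<exists>a b. 0 \<le> a \<and> a < b \<and> b \<le> 1 \<and> (AE s in lborel. (s \<in> {a..b} \<longleftrightarrow> 0 < hh s))"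
  using SS unfolding signal_structure_def hh_def by auto

lemma hh_meas[measurable]: "hh \<in> borel_measurable borel"
  unfolding hh_def using fp_facts(1) fm_facts(1) by measurable

lemma hh_nonneg: "0 \<le> hh x" unfolding hh_def using fp_facts(2) fm_facts(2) by (simp add: add_nonneg_nonneg)

lemma hh_out: "x \<notin> {0..1} \<Longrightarrow> hh x = 0" unfolding hh_def using fp_facts(3) fm_facts(3) by simp

lemma int_one: "f \<in> borel_measurable borel \<Longrightarrow> prob_space (sig_dist f) \<Longrightarrow> (\<integral>\<^sup>+ x. ennreal (f x) \<partial>lborel) = 1"
proof -
  assume [measurable]: "f \<in> borel_measurable borel" and P: "prob_space (sig_dist f)"
  have "emeasure (sig_dist f) UNIV = (\<integral>\<^sup>+ x. ennreal (f x) * indicator UNIV x \<partial>lborel)"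
    unfolding sig_dist_def by (rule emeasure_density) auto
  moreover have "emeasure (sig_dist f) UNIV = 1"
    using prob_space.emeasure_space_1[OF P] unfolding sig_dist_def by simp
  ultimately show ?thesis by simp
qed

lemma HH_prob: "prob_space HH"
proof (rule prob_spaceI)
  have "emeasure HH (space HH) = (\<integral>\<^sup>+ x. ennreal (hh x) \<partial>lborel)"
    unfolding HH_def sig_dist_def by (simp add: emeasure_density)
  also have "\<dots> = (\<integral>\<^sup>+ x. ennreal (1/2) * ennreal (fp x) + ennreal (1/2) * ennreal (fm x) \<partial>lborel)"
  proof (intro nn_integral_cong)
    fix x
    have e: "hh x = (1/2)*fp x + (1/2)*fm x" by (simp add: hh_def)
    have "ennreal ((1/2)*fp x + (1/2)*fm x) = ennreal((1/2)*fp x) + ennreal((1/2)*fm x)"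
      by (rule ennreal_plus) (auto simp: fp_facts(2) fm_facts(2))
    moreover have "ennreal((1/2)*fp x) = ennreal(1/2)*ennreal(fp x)" by (rule ennreal_mult) (auto simp: fp_facts(2))
    moreover have "ennreal((1/2)*fm x) = ennreal(1/2)*ennreal(fm x)" by (rule ennreal_mult) (auto simp: fm_facts(2))
    ultimately show "ennreal (hh x) = ennreal (1/2) * ennreal (fp x) + ennreal (1/2) * ennreal (fm x)"
      using e by simp
  qed
  also have "\<dots> = ennreal (1/2) * (\<integral>\<^sup>+ x. ennreal (fp x) \<partial>lborel) + ennreal (1/2) * (\<integral>\<^sup>+ x. ennreal (fm x) \<partial>lborel)"
    using fp_facts(1) fm_facts(1) by (simp add: nn_integral_add nn_integral_cmult)
  also have "\<dots> = ennreal (1/2) + ennreal (1/2)"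
    using int_one[OF fp_facts(1,4)] int_one[OF fm_facts(1,4)] by simp
  also have "\<dots> = 1"
    by (subst ennreal_plus[symmetric]) auto
  finally show "emeasure HH (space HH) = 1" .
qed

lemma HH_sets[simp]: "sets HH = sets borel" unfolding HH_def sig_dist_def by simp
lemma HH_space[simp]: "space HH = UNIV" unfolding HH_def sig_dist_def by simp

lemma HH_AE01: "AE x in HH. x \<in> {0..1}"
proof -
  have "0 < hh x \<Longrightarrow> x \<in> {0..1}" for x using hh_out by fastforce
  then show ?thesis unfolding HH_def sig_dist_def
    by (subst AE_density) (auto intro!: AE_I2)
qed

definition wp :: "real \<Rightarrow> real" where "wp x = 2 * x"
definition wm :: "real \<Rightarrow> real" where "wm x = 2 * (1 - x)"

lemma dens_p: "sig_dist fp = density HH (\<lambda>x. ennreal (wp x))"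
proof -
  have "density HH (\<lambda>x. ennreal (wp x)) = density lborel (\<lambda>x. ennreal (hh x) * ennreal (wp x))"
    unfolding HH_def sig_dist_def wp_def by (subst density_density_eq) auto
  moreover have AE: "AE x in lborel. ennreal (hh x) * ennreal (wp x) = ennreal (fp x)"
      using norm_AE
    proof eventually_elim
      case (elim x)
      show ?case
      proof (cases "x \<in> {0..1}")
        case True
        have "hh x * wp x = fp x" unfolding hh_def wp_def using elim by (simp add: algebra_simps)
        then show ?thesis using True hh_nonneg by (simp add: ennreal_mult[symmetric] wp_def)
      next
        case False then show ?thesis using hh_out fp_facts(3) by simp
      qed
    qed
  then have "density lborel (\<lambda>x. ennreal (hh x) * ennreal (wp x)) = density lborel (\<lambda>x. ennreal (fp x))"
    by (intro density_cong[OF _ _ AE]; unfold wp_def; measurable)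
  ultimately show ?thesis unfolding sig_dist_def by simp
qed

lemma dens_m: "sig_dist fm = density HH (\<lambda>x. ennreal (wm x))"
proof -
  have "density HH (\<lambda>x. ennreal (wm x)) = density lborel (\<lambda>x. ennreal (hh x) * ennreal (wm x))"
    unfolding HH_def sig_dist_def wm_def by (subst density_density_eq) auto
  moreover have AE: "AE x in lborel. ennreal (hh x) * ennreal (wm x) = ennreal (fm x)"
      using norm_AE
    proof eventually_elim
      case (elim x)
      show ?case
      proof (cases "x \<in> {0..1}")
        case True
        have "hh x * wm x = fm x" unfolding hh_def wm_def using elim by (simp add: algebra_simps)
        then show ?thesis using True hh_nonneg by (simp add: ennreal_mult[symmetric] wm_def)
      next
        case False then show ?thesis using hh_out fm_facts(3) by simp
      qed
    qed
  then have "density lborel (\<lambda>x. ennreal (hh x) * ennreal (wm x)) = density lborel (\<lambda>x. ennreal (fm x))"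
    by (intro density_cong[OF _ _ AE]; unfold wm_def; measurable)
  ultimately show ?thesis unfolding sig_dist_def by simp
qed

lemma wp_meas[measurable]: "wp \<in> borel_measurable borel" unfolding wp_def by measurable
lemma wm_meas[measurable]: "wm \<in> borel_measurable borel" unfolding wm_def by measurable

lemma Dp_prob: "prob_space (density HH (\<lambda>x. ennreal (wp x)))" using fp_facts(4) dens_p by simp
lemma Dm_prob: "prob_space (density HH (\<lambda>x. ennreal (wm x)))" using fm_facts(4) dens_m by simp

definition Pm :: "nat \<Rightarrow> (nat \<Rightarrow> real) measure" where "Pm m = PiM {..<m} (\<lambda>_. HH)"
definition Aset :: "nat \<Rightarrow> real \<Rightarrow> (nat \<Rightarrow> real) set" where "Aset m s = {x \<in> space (Pm m). (1 - s) * (\<Prod>k<m. 1 - x k) \<le> s * (\<Prod>k<m. x k)}"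

lemma Pm_prob: "prob_space (Pm m)"
  unfolding Pm_def by (rule prob_space_PiM) (rule HH_prob)

lemma comp_meas: "k \<in> I \<Longrightarrow> (\<lambda>x. x k) \<in> borel_measurable (PiM I (\<lambda>_. HH))"
  using measurable_component_singleton[of k I "\<lambda>_. HH"] measurable_cong_sets[OF refl HH_sets] by metis

lemma prod_meas:
  fixes g :: "real \<Rightarrow> real"
  assumes [measurable]: "g \<in> borel_measurable borel"
  shows "(\<lambda>x. \<Prod>k<(m::nat). g (x k)) \<in> borel_measurable (PiM {..<m} (\<lambda>_. HH))"
  by (rule borel_measurable_prod) (rule measurable_compose[OF comp_meas assms], simp)

lemma prod_meas_id[measurable]: "(\<lambda>x. \<Prod>k<(m::nat). x k) \<in> borel_measurable (PiM {..<m} (\<lambda>_. HH))"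
  using prod_meas[of "\<lambda>t. t" m] by simp

lemma prod_meas_1m[measurable]: "(\<lambda>x. \<Prod>k<(m::nat). 1 - x k) \<in> borel_measurable (PiM {..<m} (\<lambda>_. HH))"
  using prod_meas[of "\<lambda>t. 1 - t" m] by simp

lemma Aset_sets: "Aset m s \<in> sets (Pm m)"
  unfolding Aset_def Pm_def by measurable

lemma space_eq: "space (PiM {..<m} (\<lambda>_. density HH w)) = space (Pm m)"
  unfolding Pm_def by (simp add: space_PiM)

lemma sets_eq: "sets (PiM {..<m} (\<lambda>_. density HH w)) = sets (Pm m)"
  unfolding Pm_def by (intro sets_PiM_cong) auto

lemma ev_p: "event_prob fp m s = measure (PiM {..<m} (\<lambda>_. density HH (\<lambda>x. ennreal (wp x)))) (Aset m s)"
  unfolding event_prob_def dens_p Aset_def space_eq ..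

lemma ev_m: "event_prob fm m s = measure (PiM {..<m} (\<lambda>_. density HH (\<lambda>x. ennreal (wm x)))) (Aset m s)"
  unfolding event_prob_def dens_m Aset_def space_eq ..

lemma AE01m: "AE x in Pm m. \<forall>k\<in>{..<m}. x k \<in> {0..1}"
proof -
  have "AE x in Pm m. x k \<in> {0..1}" if "k \<in> {..<m}" for k
    unfolding Pm_def using HH_AE01 HH_prob that by (intro AE_PiM_component) auto
  then show ?thesis by (intro AE_finite_allI) auto
qed

end


context sigstr begin

lemma L7:
  fixes w :: "real \<Rightarrow> real"
  assumes wm[measurable]: "w \<in> borel_measurable borel" and wnn: "\<And>x. x \<in> {0..1} \<Longrightarrow> 0 \<le> w x"
    and Pw: "prob_space (density HH (\<lambda>x. ennreal (w x)))"
    and B: "B \<in> sets (Pm m)" and c: "0 \<le> c"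
  shows "ennreal (c * measure (PiM {..<m} (\<lambda>_. density HH (\<lambda>x. ennreal (w x)))) B)
    = (\<integral>\<^sup>+ x. indicator B x * ennreal (c * (\<Prod>k<m. w (x k))) \<partial>Pm m)"
proof -
  let ?Q = "PiM {..<m} (\<lambda>_. density HH (\<lambda>x. ennreal (w x)))"
  interpret Q: prob_space ?Q by (rule prob_space_PiM) (rule Pw)
  have wH: "(\<lambda>x. ennreal (w x)) \<in> borel_measurable HH"
  proof -
    have wb: "(\<lambda>x. ennreal (w x)) \<in> borel_measurable borel" using measurable_compose[OF wm measurable_ennreal] by simp
    show ?thesis by (simp only: measurable_cong_sets[OF HH_sets refl] wb)
  qed
  have BQ: "B \<in> sets ?Q" using B by (simp only: sets_eq)
  note cm[measurable] = comp_meas[of _ "{..<m}"]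
  have Bm[measurable]: "B \<in> sets (PiM {..<m} (\<lambda>_. HH))" using B unfolding Pm_def .
  have "emeasure ?Q B = (\<integral>\<^sup>+ x. indicator B x \<partial>?Q)"
    using BQ by simp
  also have "\<dots> = (\<integral>\<^sup>+ x. indicator B x * (\<Prod>k\<in>{..<m}. ennreal (w (x k))) \<partial>Pm m)"
    unfolding Pm_def by (rule PD[OF HH_prob Pw wH]) auto
  finally have e1: "emeasure ?Q B = (\<integral>\<^sup>+ x. indicator B x * (\<Prod>k\<in>{..<m}. ennreal (w (x k))) \<partial>Pm m)" .
  have "ennreal (c * measure ?Q B) = ennreal c * emeasure ?Q B"
    using ennreal_mult[OF c measure_nonneg] Q.emeasure_eq_measure by metis
  also have "\<dots> = (\<integral>\<^sup>+ x. ennreal c * (indicator B x * (\<Prod>k\<in>{..<m}. ennreal (w (x k)))) \<partial>Pm m)"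
    unfolding e1 by (rule nn_integral_cmult[symmetric]) (unfold Pm_def, measurable)
  also have "\<dots> = (\<integral>\<^sup>+ x. indicator B x * ennreal (c * (\<Prod>k<m. w (x k))) \<partial>Pm m)"
    using AE01m
  proof (rule nn_integral_cong_AE[OF AE_mp[OF _ AE_I2]], intro impI)
    fix x :: "nat \<Rightarrow> real" assume x: "\<forall>k\<in>{..<m}. x k \<in> {0..1}"
    have "(\<Prod>k\<in>{..<m}. ennreal (w (x k))) = ennreal (\<Prod>k<m. w (x k))"
      using x wnn by (intro prod_ennreal) auto
    then show "ennreal c * (indicator B x * (\<Prod>k\<in>{..<m}. ennreal (w (x k)))) = indicator B x * ennreal (c * (\<Prod>k<m. w (x k)))"
    proof -
      note e = \<open>(\<Prod>k\<in>{..<m}. ennreal (w (x k))) = ennreal (\<Prod>k<m. w (x k))\<close>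
      have P0: "0 \<le> (\<Prod>k<m. w (x k))" using x wnn by (intro prod_nonneg) auto
      have m: "ennreal (c * (\<Prod>k<m. w (x k))) = ennreal c * ennreal (\<Prod>k<m. w (x k))"
        by (rule ennreal_mult[OF c P0])
      show ?thesis unfolding m e by (simp add: mult_ac)
    qed
  qed
  finally show ?thesis .
qed

lemma CMP:
  fixes w1 w2 :: "real \<Rightarrow> real"
  assumes [measurable]: "w1 \<in> borel_measurable borel" "\<And>x. x \<in> {0..1} \<Longrightarrow> 0 \<le> w1 x"
    "prob_space (density HH (\<lambda>x. ennreal (w1 x)))"
  assumes [measurable]: "w2 \<in> borel_measurable borel" "\<And>x. x \<in> {0..1} \<Longrightarrow> 0 \<le> w2 x"
    "prob_space (density HH (\<lambda>x. ennreal (w2 x)))"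
    and B: "B \<in> sets (Pm m)" and c: "0 \<le> c" and d: "0 \<le> d"
    and le: "\<And>x. x \<in> B \<Longrightarrow> c * (\<Prod>k<m. w1 (x k)) \<le> d * (\<Prod>k<m. w2 (x k))"
  shows "c * measure (PiM {..<m} (\<lambda>_. density HH (\<lambda>x. ennreal (w1 x)))) B
    \<le> d * measure (PiM {..<m} (\<lambda>_. density HH (\<lambda>x. ennreal (w2 x)))) B"
proof -
  have "ennreal (c * measure (PiM {..<m} (\<lambda>_. density HH (\<lambda>x. ennreal (w1 x)))) B)
    = (\<integral>\<^sup>+ x. indicator B x * ennreal (c * (\<Prod>k<m. w1 (x k))) \<partial>Pm m)"
    by (rule L7) (use assms in auto)
  also have "\<dots> \<le> (\<integral>\<^sup>+ x. indicator B x * ennreal (d * (\<Prod>k<m. w2 (x k))) \<partial>Pm m)"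
    by (intro nn_integral_mono) (auto simp: indicator_def intro!: ennreal_leI le)
  also have "\<dots> = ennreal (d * measure (PiM {..<m} (\<lambda>_. density HH (\<lambda>x. ennreal (w2 x)))) B)"
    by (rule L7[symmetric]) (use assms in auto)
  finally show ?thesis using d by (simp add: ennreal_le_iff)
qed

end


context sigstr begin

abbreviation "Qp m \<equiv> PiM {..<m} (\<lambda>_. density HH (\<lambda>x. ennreal (wp x)))"
abbreviation "Qm m \<equiv> PiM {..<m} (\<lambda>_. density HH (\<lambda>x. ennreal (wm x)))"

lemma Qp_prob: "prob_space (Qp m)" by (rule prob_space_PiM) (rule Dp_prob)
lemma Qm_prob: "prob_space (Qm m)" by (rule prob_space_PiM) (rule Dm_prob)

lemma wp_nn: "x \<in> {0..1} \<Longrightarrow> 0 \<le> wp x" unfolding wp_def by auto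
lemma wm_nn: "x \<in> {0..1} \<Longrightarrow> 0 \<le> wm x" unfolding wm_def by auto

lemma prod_wp: "(\<Prod>k<m. wp (x k)) = 2 ^ m * (\<Prod>k<m. x k)"
  unfolding wp_def by (simp add: prod.distrib)
lemma prod_wm: "(\<Prod>k<m. wm (x k)) = 2 ^ m * (\<Prod>k<m. 1 - x k)"
  unfolding wm_def by (subst prod.distrib) simp

lemma CMPin:
  assumes B: "B \<in> sets (Pm m)" "B \<subseteq> Aset m s" and s: "s \<in> {0..1}"
  shows "(1 - s) * measure (Qm m) B \<le> s * measure (Qp m) B"
proof (rule CMP[OF wm_meas wm_nn Dm_prob wp_meas wp_nn Dp_prob B(1)])
  fix x assume "x \<in> B"
  then have "(1 - s) * (\<Prod>k<m. 1 - x k) \<le> s * (\<Prod>k<m. x k)" using B unfolding Aset_def by auto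
  then have "2 ^ m * ((1 - s) * (\<Prod>k<m. 1 - x k)) \<le> 2 ^ m * (s * (\<Prod>k<m. x k))"
    by (intro mult_left_mono) auto
  then show "(1 - s) * (\<Prod>k<m. wm (x k)) \<le> s * (\<Prod>k<m. wp (x k))"
    unfolding prod_wp prod_wm by (simp add: mult_ac)
qed (use s in auto)

lemma CMPout:
  assumes B: "B \<in> sets (Pm m)" "B \<inter> Aset m s = {}" and s: "s \<in> {0..1}"
  shows "s * measure (Qp m) B \<le> (1 - s) * measure (Qm m) B"
proof (rule CMP[OF wp_meas wp_nn Dp_prob wm_meas wm_nn Dm_prob B(1)])
  fix x assume x: "x \<in> B"
  then have "x \<in> space (Pm m)" using sets.sets_into_space[OF B(1)] by auto
  then have "s * (\<Prod>k<m. x k) \<le> (1 - s) * (\<Prod>k<m. 1 - x k)" using B x unfolding Aset_def by auto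
  then have "2 ^ m * (s * (\<Prod>k<m. x k)) \<le> 2 ^ m * ((1 - s) * (\<Prod>k<m. 1 - x k))"
    by (intro mult_left_mono) auto
  then show "s * (\<Prod>k<m. wp (x k)) \<le> (1 - s) * (\<Prod>k<m. wm (x k))"
    unfolding prod_wp prod_wm by (simp add: mult_ac)
qed (use s in auto)

lemma OPT:
  assumes B: "B \<in> sets (Pm m)" and s: "s \<in> {0..1}"
  shows "s * measure (Qp m) B - (1 - s) * measure (Qm m) B
    \<le> s * measure (Qp m) (Aset m s) - (1 - s) * measure (Qm m) (Aset m s)"
proof -
  interpret P: prob_space "Qp m" by (rule Qp_prob)
  interpret M: prob_space "Qm m" by (rule Qm_prob)
  let ?A = "Aset m s"
  have A: "?A \<in> sets (Pm m)" by (rule Aset_sets)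
  have sP: "sets (Qp m) = sets (Pm m)" "sets (Qm m) = sets (Pm m)" by (rule sets_eq)+
  have BA: "B - ?A \<in> sets (Pm m)" "?A - B \<in> sets (Pm m)" "B \<inter> ?A \<in> sets (Pm m)" using A B by auto
  have d1: "measure (Qp m) (B - ?A) = measure (Qp m) B - measure (Qp m) (B \<inter> ?A)"
    by (rule P.finite_measure_Diff') (use A B sP in auto)
  have d2: "measure (Qm m) (B - ?A) = measure (Qm m) B - measure (Qm m) (B \<inter> ?A)"
    by (rule M.finite_measure_Diff') (use A B sP in auto)
  have d3: "measure (Qp m) (?A - B) = measure (Qp m) ?A - measure (Qp m) (?A \<inter> B)"
    by (rule P.finite_measure_Diff') (use A B sP in auto)
  have d4: "measure (Qm m) (?A - B) = measure (Qm m) ?A - measure (Qm m) (?A \<inter> B)"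
    by (rule M.finite_measure_Diff') (use A B sP in auto)
  have c1: "s * measure (Qp m) (B - ?A) \<le> (1 - s) * measure (Qm m) (B - ?A)"
    by (rule CMPout[OF BA(1) _ s]) auto
  have c2: "(1 - s) * measure (Qm m) (?A - B) \<le> s * measure (Qp m) (?A - B)"
    by (rule CMPin[OF BA(2) _ s]) auto
  have "B \<inter> ?A = ?A \<inter> B" by auto
  then show ?thesis using c1 c2 unfolding d1 d2 d3 d4 by (simp add: algebra_simps)
qed

lemma fb_eq: "first_best fp fm n s = s * measure (Qp (n - 1)) (Aset (n - 1) s) - (1 - s) * measure (Qm (n - 1)) (Aset (n - 1) s)"
  unfolding first_best_def ev_p ev_m ..

lemma emb_meas:
  fixes w :: "real \<Rightarrow> real"
  assumes Pw: "prob_space (density HH (\<lambda>x. ennreal (w x)))"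
  shows "measure (PiM {..<Suc m} (\<lambda>_. density HH (\<lambda>x. ennreal (w x)))) (prod_emb {..<Suc m} (\<lambda>_. HH) {..<m} (Aset m s))
       = measure (PiM {..<m} (\<lambda>_. density HH (\<lambda>x. ennreal (w x)))) (Aset m s)"
proof -
  interpret PP: product_prob_space "\<lambda>_. density HH (\<lambda>x. ennreal (w x))" UNIV
    using Pw by (simp add: product_prob_space.intro product_prob_space_axioms.intro product_sigma_finite.intro prob_space_imp_sigma_finite)
  have e: "prod_emb {..<Suc m} (\<lambda>_. HH) {..<m} (Aset m s) = prod_emb {..<Suc m} (\<lambda>_. density HH (\<lambda>x. ennreal (w x))) {..<m} (Aset m s)"
    unfolding prod_emb_def by (simp add: space_PiM)
  have X: "Aset m s \<in> sets (PiM {..<m} (\<lambda>_. density HH (\<lambda>x. ennreal (w x))))"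
    using Aset_sets sets_eq[of m "\<lambda>x. ennreal (w x)"] by simp
  show ?thesis unfolding e measure_def
    by (subst PP.emeasure_prod_emb[OF _ _ X]) auto
qed

lemma MONO:
  assumes s: "s \<in> {0..1}" and n: "1 \<le> n"
  shows "first_best fp fm n s \<le> first_best fp fm (n + 1) s"
proof -
  obtain m where m: "n = Suc m" using n by (cases n) auto
  let ?B = "prod_emb {..<Suc m} (\<lambda>_. HH) {..<m} (Aset m s)"
  have B: "?B \<in> sets (Pm (Suc m))" unfolding Pm_def
    by (rule measurable_prod_emb) (use Aset_sets[of m s] in \<open>auto simp: Pm_def\<close>)
  have "first_best fp fm n s = s * measure (Qp (Suc m)) ?B - (1 - s) * measure (Qm (Suc m)) ?B"
    unfolding fb_eq m emb_meas[OF Dp_prob] emb_meas[OF Dm_prob] by simp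
  also have "\<dots> \<le> s * measure (Qp (Suc m)) (Aset (Suc m) s) - (1 - s) * measure (Qm (Suc m)) (Aset (Suc m) s)"
    by (rule OPT[OF B s])
  also have "\<dots> = first_best fp fm (n + 1) s" unfolding fb_eq m by simp
  finally show ?thesis .
qed

end


context sigstr begin

definition gg :: "real \<Rightarrow> real" where "gg y = 2 * sqrt (y * (1 - y))"

lemma gg_meas[measurable]: "gg \<in> borel_measurable borel" unfolding gg_def by measurable

lemma gg_nn: "y \<in> {0..1} \<Longrightarrow> 0 \<le> gg y" unfolding gg_def by auto

lemma gg_sq4: "y \<in> {0..1} \<Longrightarrow> (gg y)^2 = 4 * (y * (1 - y))"
proof -
  assume y: "y \<in> {0..1}"
  have nn: "0 \<le> y * (1 - y)" using y by (intro mult_nonneg_nonneg) auto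
  have "(gg y)^2 = 2^2 * (sqrt (y * (1 - y)))^2" unfolding gg_def by (rule power_mult_distrib)
  also have "\<dots> = 4 * (y * (1 - y))" using real_sqrt_pow2[OF nn] by simp
  finally show ?thesis .
qed

lemma gg_sq: "y \<in> {0..1} \<Longrightarrow> (gg y)^2 = wp y * wm y"
  using gg_sq4[of y] unfolding wp_def wm_def by simp

lemma sq_id: "1 - 4 * (y * (1 - y)) = (2 * y - 1)^2" for y :: real
  by (simp add: power2_eq_square algebra_simps)

lemma gg_le1: "y \<in> {0..1} \<Longrightarrow> gg y \<le> 1"
proof -
  assume y: "y \<in> {0..1}"
  have "(gg y)^2 \<le> 1" using gg_sq4[OF y] sq_id[of y] zero_le_power2[of "2*y-1"] by linarith
  then have "(gg y)^2 \<le> 1^2" by simp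
  then show ?thesis by (rule power2_le_imp_le) simp
qed

lemma gg_lt1: "y \<in> {0..1} \<Longrightarrow> y \<noteq> 1/2 \<Longrightarrow> gg y < 1"
proof -
  assume y: "y \<in> {0..1}" and y2: "y \<noteq> 1/2"
  have "2 * y - 1 \<noteq> 0" using y2 by simp
  then have "0 < (2*y - 1)^2" by simp
  then have "(gg y)^2 < 1" using gg_sq4[OF y] sq_id[of y] by linarith
  then have "(gg y)^2 < 1^2" by simp
  then show ?thesis by (rule power2_less_imp_less) simp
qed

definition "rho = (\<integral>\<^sup>+ y. ennreal (gg y) \<partial>HH)"

lemma meas_HH: "(f::real \<Rightarrow> ennreal) \<in> borel_measurable borel \<Longrightarrow> f \<in> borel_measurable HH"
  by (simp only: measurable_cong_sets[OF HH_sets refl])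

lemma rho_lt1: "rho < 1"
proof (rule ccontr)
  assume "\<not> rho < 1"
  then have r1: "1 \<le> rho" by simp
  let ?r' = "\<integral>\<^sup>+ y. ennreal (1 - gg y) \<partial>HH"
  have m1: "(\<lambda>y. ennreal (gg y)) \<in> borel_measurable HH" by (rule meas_HH) measurable
  have m2: "(\<lambda>y. ennreal (1 - gg y)) \<in> borel_measurable HH" by (rule meas_HH) measurable
  have "rho + ?r' = (\<integral>\<^sup>+ y. ennreal (gg y) + ennreal (1 - gg y) \<partial>HH)"
    unfolding rho_def by (rule nn_integral_add[symmetric]) (use m1 m2 in auto)
  also have "\<dots> = (\<integral>\<^sup>+ y. 1 \<partial>HH)"
    using HH_AE01
  proof (rule nn_integral_cong_AE[OF AE_mp[OF _ AE_I2]], intro impI)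
    fix y :: real assume y: "y \<in> {0..1}"
    have "ennreal (gg y) + ennreal (1 - gg y) = ennreal (gg y + (1 - gg y))"
      using gg_nn[OF y] gg_le1[OF y] by (intro ennreal_plus[symmetric]) auto
    then show "ennreal (gg y) + ennreal (1 - gg y) = 1" by simp
  qed
  also have "\<dots> = 1" using prob_space.emeasure_space_1[OF HH_prob] by simp
  finally have sum1: "rho + ?r' = 1" .
  have "1 + ?r' \<le> 1 + 0" using r1 sum1 by (metis add_right_mono add.right_neutral)
  then have "?r' \<le> 0" by (subst (asm) ennreal_add_left_cancel_le) auto
  then have "?r' = 0" by simp
  then have "AE y in HH. ennreal (1 - gg y) = 0" using nn_integral_0_iff_AE[OF m2] by simp
  then have AE1: "AE y in lborel. 0 < ennreal (hh y) \<longrightarrow> ennreal (1 - gg y) = 0"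
    unfolding HH_def sig_dist_def by (subst (asm) AE_density) auto
  obtain a b where ab: "0 \<le> a" "a < b" "b \<le> 1" "AE s in lborel. (s \<in> {a..b} \<longleftrightarrow> 0 < hh s)"
    using supp by blast
  have AE3: "AE y in lborel. y \<noteq> 1/2" by (rule AE_lborel_singleton)
  have "AE y in lborel. y \<notin> {a<..<b}"
    using AE1 ab(4) AE3
  proof eventually_elim
    case (elim y)
    show ?case
    proof
      assume y: "y \<in> {a<..<b}"
      then have y01: "y \<in> {0..1}" using ab by auto
      have "0 < hh y" using elim y by auto
      then have "ennreal (1 - gg y) = 0" using elim by simp
      then have "1 - gg y \<le> 0" using ennreal_eq_0_iff by blast
      moreover have "gg y < 1" using gg_lt1[OF y01] elim by auto
      ultimately show False by simp
    qed
  qed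
  then have "{a<..<b} \<in> null_sets lborel" by (subst AE_iff_null_sets) auto
  then have "emeasure lborel {a<..<b} = 0" by auto
  then show False using ab by simp
qed

lemma rho_pow: "(\<integral>\<^sup>+ x. (\<Prod>k<m. ennreal (gg (x k))) \<partial>Pm m) = rho ^ m"
proof -
  interpret PH: product_sigma_finite "\<lambda>_. HH"
    by (simp add: HH_prob product_sigma_finite.intro prob_space_imp_sigma_finite)
  have "(\<integral>\<^sup>+ x. (\<Prod>k\<in>{..<m}. ennreal (gg (x k))) \<partial>Pm m) = (\<Prod>k\<in>{..<m}. rho)"
    unfolding Pm_def rho_def
    by (rule PH.product_nn_integral_prod) (auto intro: meas_HH)
  then show ?thesis by simp
qed

end


context sigstr begin

lemma KEY:
  assumes s: "s \<in> {0..1}" and x: "\<forall>k\<in>{..<m}. x k \<in> {0..1}"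
  shows "indicator (space (Pm m) - Aset m s) x * ennreal (s * (\<Prod>k<m. wp (x k)))
       + indicator (Aset m s) x * ennreal ((1 - s) * (\<Prod>k<m. wm (x k)))
     \<le> (\<Prod>k<m. ennreal (gg (x k)))"
proof -
  define a where "a = s * (\<Prod>k<m. wp (x k))"
  define b where "b = (1 - s) * (\<Prod>k<m. wm (x k))"
  define G where "G = (\<Prod>k<m. gg (x k))"
  have a0: "0 \<le> a" unfolding a_def using s x by (intro mult_nonneg_nonneg prod_nonneg wp_nn) auto
  have b0: "0 \<le> b" unfolding b_def using s x by (intro mult_nonneg_nonneg prod_nonneg wm_nn) auto
  have G0: "0 \<le> G" unfolding G_def using x by (intro prod_nonneg gg_nn) auto
  have eG: "(\<Prod>k<m. ennreal (gg (x k))) = ennreal G"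
    unfolding G_def using x by (intro prod_ennreal gg_nn) auto
  have "(\<Prod>k<m. wp (x k)) * (\<Prod>k<m. wm (x k)) = (\<Prod>k<m. wp (x k) * wm (x k))"
    by (rule prod.distrib[symmetric])
  also have "\<dots> = (\<Prod>k<m. (gg (x k))^2)" using x by (intro prod.cong) (auto simp: gg_sq)
  also have "\<dots> = G^2" unfolding G_def by (rule prod_power_distrib[symmetric])
  finally have pp: "(\<Prod>k<m. wp (x k)) * (\<Prod>k<m. wm (x k)) = G^2" .
  have ss: "s * (1 - s) \<le> 1" using s by (auto intro: mult_le_one)
  have ab: "a * b \<le> G^2"
  proof -
    have "a * b = (s * (1 - s)) * G^2" unfolding a_def b_def pp[symmetric] by (simp add: mult_ac)
    also have "\<dots> \<le> 1 * G^2" by (rule mult_right_mono[OF ss]) simp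
    finally show ?thesis by simp
  qed
  show ?thesis
  proof (cases "x \<in> Aset m s")
    case True
    then have "(1 - s) * (\<Prod>k<m. 1 - x k) \<le> s * (\<Prod>k<m. x k)" unfolding Aset_def by auto
    then have "2 ^ m * ((1 - s) * (\<Prod>k<m. 1 - x k)) \<le> 2 ^ m * (s * (\<Prod>k<m. x k))"
      by (intro mult_left_mono) auto
    then have "b \<le> a" unfolding a_def b_def prod_wp prod_wm by (simp add: mult_ac)
    then have "b * b \<le> a * b" using b0 by (rule mult_right_mono)
    then have "b^2 \<le> G^2" using ab by (simp add: power2_eq_square)
    then have "b \<le> G" using G0 by (rule power2_le_imp_le)
    then show ?thesis using True eG unfolding b_def[symmetric] by (simp add: ennreal_leI)
  next
    case False
    show ?thesis
    proof (cases "x \<in> space (Pm m)")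
      case True
      then have "\<not> (1 - s) * (\<Prod>k<m. 1 - x k) \<le> s * (\<Prod>k<m. x k)" using False unfolding Aset_def by auto
      then have "s * (\<Prod>k<m. x k) \<le> (1 - s) * (\<Prod>k<m. 1 - x k)" by simp
      then have "2 ^ m * (s * (\<Prod>k<m. x k)) \<le> 2 ^ m * ((1 - s) * (\<Prod>k<m. 1 - x k))"
        by (intro mult_left_mono) auto
      then have "a \<le> b" unfolding a_def b_def prod_wp prod_wm by (simp add: mult_ac)
      then have "a * a \<le> a * b" using a0 by (rule mult_left_mono)
      then have "a^2 \<le> G^2" using ab by (simp add: power2_eq_square)
      then have "a \<le> G" using G0 by (rule power2_le_imp_le)
      then show ?thesis using True False eG unfolding a_def[symmetric] by (simp add: ennreal_leI)
    next
      case F2: False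
      then show ?thesis using False by simp
    qed
  qed
qed

lemma ERR:
  assumes s: "s \<in> {0..1}"
  shows "0 \<le> s - first_best fp fm n s \<and> ennreal (s - first_best fp fm n s) \<le> rho ^ (n - 1)"
proof -
  define m where "m = n - 1"
  let ?A = "Aset m s"
  let ?C = "space (Pm m) - Aset m s"
  interpret P: prob_space "Qp m" by (rule Qp_prob)
  interpret M: prob_space "Qm m" by (rule Qm_prob)
  have A: "?A \<in> sets (Pm m)" by (rule Aset_sets)
  have C: "?C \<in> sets (Pm m)" using A by auto
  have AP: "?A \<in> sets (Qp m)" using A sets_eq[of m "\<lambda>x. ennreal (wp x)"] by simp
  have "measure (Qp m) (space (Qp m) - ?A) = measure (Qp m) (space (Qp m)) - measure (Qp m) ?A"
    by (rule P.finite_measure_compl[OF AP])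
  then have cp: "measure (Qp m) ?C = 1 - measure (Qp m) ?A"
    using space_eq[of m "\<lambda>x. ennreal (wp x)"] P.prob_space by simp
  have fb: "first_best fp fm n s = s * measure (Qp m) ?A - (1 - s) * measure (Qm m) ?A"
    unfolding fb_eq m_def ..
  have diff: "s - first_best fp fm n s = s * measure (Qp m) ?C + (1 - s) * measure (Qm m) ?A"
    unfolding fb cp by (simp add: algebra_simps)
  have t1: "0 \<le> s * measure (Qp m) ?C" using s by simp
  have t2: "0 \<le> (1 - s) * measure (Qm m) ?A" using s by simp
  have mwp[measurable]: "(\<lambda>x. \<Prod>k<m. wp (x k)) \<in> borel_measurable (PiM {..<m} (\<lambda>_. HH))"
    by (rule prod_meas) (rule wp_meas)
  have mwm[measurable]: "(\<lambda>x. \<Prod>k<m. wm (x k)) \<in> borel_measurable (PiM {..<m} (\<lambda>_. HH))"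
    by (rule prod_meas) (rule wm_meas)
  have Am[measurable]: "?A \<in> sets (PiM {..<m} (\<lambda>_. HH))" using A unfolding Pm_def .
  have Cm[measurable]: "?C \<in> sets (PiM {..<m} (\<lambda>_. HH))" using C unfolding Pm_def .
  have "ennreal (s - first_best fp fm n s) = ennreal (s * measure (Qp m) ?C) + ennreal ((1 - s) * measure (Qm m) ?A)"
    unfolding diff using t1 t2 by (rule ennreal_plus)
  also have "\<dots> = (\<integral>\<^sup>+ x. indicator ?C x * ennreal (s * (\<Prod>k<m. wp (x k))) \<partial>Pm m)
      + (\<integral>\<^sup>+ x. indicator ?A x * ennreal ((1 - s) * (\<Prod>k<m. wm (x k))) \<partial>Pm m)"
  proof -
    have c1: "0 \<le> s" and c2: "0 \<le> 1 - s" using s by auto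
    show ?thesis by (simp only: L7[OF wp_meas wp_nn Dp_prob C c1] L7[OF wm_meas wm_nn Dm_prob A c2])
  qed
  also have "\<dots> = (\<integral>\<^sup>+ x. indicator ?C x * ennreal (s * (\<Prod>k<m. wp (x k)))
      + indicator ?A x * ennreal ((1 - s) * (\<Prod>k<m. wm (x k))) \<partial>Pm m)"
    by (rule nn_integral_add[symmetric]) (unfold Pm_def; measurable)+
  also have "\<dots> \<le> (\<integral>\<^sup>+ x. (\<Prod>k<m. ennreal (gg (x k))) \<partial>Pm m)"
    using AE01m by (rule nn_integral_mono_AE[OF AE_mp[OF _ AE_I2]]) (auto intro: KEY[OF s])
  also have "\<dots> = rho ^ m" by (rule rho_pow)
  finally show ?thesis using t1 t2 diff unfolding m_def by simp
qed

lemma ERR_real: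
  assumes s: "s \<in> {0..1}"
  shows "\<bar>first_best fp fm n s - s\<bar> \<le> enn2real rho ^ (n - 1)"
proof -
  have "rho < top" using rho_lt1 by (rule less_le_trans) simp
  then have r: "rho = ennreal (enn2real rho)" by simp
  have "ennreal (s - first_best fp fm n s) \<le> ennreal (enn2real rho ^ (n - 1))"
    using ERR[OF s, of n] r by (metis ennreal_power enn2real_nonneg)
  then have "s - first_best fp fm n s \<le> enn2real rho ^ (n - 1)"
    by (simp add: ennreal_le_iff)
  then show ?thesis using ERR[OF s, of n] by simp
qed

end

theorem lemmaE1:
  fixes fp fm :: "real \<Rightarrow> real"
  assumes "signal_structure fp fm"
  shows "(\<forall>n\<ge>2. \<forall>s\<in>{0..1}. first_best fp fm n s \<le> first_best fp fm (n + 1) s)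
     \<and> uniform_limit {0..1} (\<lambda>n s. first_best fp fm n s) (\<lambda>s. s) sequentially"
proof -
  interpret S: sigstr fp fm using assms by (rule sigstr.intro)
  have part1: "\<forall>n\<ge>2. \<forall>s\<in>{0..1}. first_best fp fm n s \<le> first_best fp fm (n + 1) s"
    using S.MONO by auto
  define r where "r = enn2real S.rho"
  have "S.rho < top" using S.rho_lt1 by (rule less_le_trans) simp
  then have rr: "S.rho = ennreal r" unfolding r_def by simp
  have r0: "0 \<le> r" unfolding r_def by simp
  have r1: "r < 1" using S.rho_lt1 rr by simp
  have lim: "(\<lambda>n. r ^ n) \<longlonglongrightarrow> 0" using r0 r1 by (intro LIMSEQ_power_zero) simp
  have part2: "uniform_limit {0..1} (\<lambda>n s. first_best fp fm n s) (\<lambda>s. s) sequentially"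
    unfolding uniform_limit_sequentially_iff
  proof (intro allI impI)
    fix e :: real assume e: "0 < e"
    from lim e obtain N where N: "\<And>n. n \<ge> N \<Longrightarrow> r ^ n < e"
      unfolding lim_sequentially by (auto simp: r0)
    show "\<exists>N. \<forall>n\<ge>N. \<forall>x\<in>{0..1}. dist (first_best fp fm n x) x < e"
    proof (intro exI allI impI ballI)
      fix n x assume n: "Suc N \<le> n" and x: "x \<in> {0..(1::real)}"
      have "dist (first_best fp fm n x) x = \<bar>first_best fp fm n x - x\<bar>" by (simp add: dist_real_def)
      also have "\<dots> \<le> r ^ (n - 1)" using S.ERR_real[OF x, of n] unfolding r_def .
      also have "\<dots> < e" using n by (intro N) auto
      finally show "dist (first_best fp fm n x) x < e" .
    qed
  qed
  show ?thesis using part1 part2 by blast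
qed

end
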